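(* There exist a function $\gamma:[0,\infty)\to\mathbb{R}$ and $t_0>0$ such that (i) $\gamma(t)>0$ for $t\in[0,t_0)$ and $\gamma(t)=0$ for $t\in[t_0,\infty)$; (ii) $e^{-t}-w_-(e^{-t})-\int_0^tw_-(e^{-t+s})\gamma(s)\,ds=0$ for all $t\in[0,t_0]$; (iii) $e^{-t}-w_-(e^{-t})-\int_0^tw_-(e^{-t+s})\gamma(s)\,ds<0$ for all $t\in(t_0,\infty)$.
   Context: $w_-:[0,1]\to[0,1]$ is strictly increasing, thrice differentiable, with $w_-(0)=0$, $w_-(1)=1$, $w_-'(0)>1$, $w_-'(1)>1$ and $w_-'''(p)>0$ for all $p$. *)

theory Defs
  imports "HOL-Analysis.Analysis"
begin

end

theory Submission
  imports Defs
begin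

lemma ext_deriv:
  fixes k k' :: "real \<Rightarrow> real"
  assumes d: "\<And>r. r \<ge> 0 \<Longrightarrow> (k has_real_derivative k' r) (at r within {0..})"
  shows "((\<lambda>r. if r \<ge> 0 then k r else k 0 + k' 0 * r) has_real_derivative (if r \<ge> 0 then k' r else k' 0)) (at r)"
proof -
  define kk where "kk = (\<lambda>r. if r \<ge> 0 then k r else k 0 + k' 0 * r)"
  have A: "(kk has_real_derivative k' r) (at r within {0..})" if "r \<ge> 0" for r
    using has_field_derivative_transform_within[OF d[OF that] zero_less_one, of kk] that
    by (auto simp: kk_def)
  have B: "(kk has_real_derivative k' 0) (at r within {..0})" if "r \<le> 0" for r
  proof -
    have "((\<lambda>r. k 0 + k' 0 * r) has_real_derivative k' 0) (at r within {..0})"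
      by (auto intro!: derivative_eq_intros)
    then show ?thesis
      using has_field_derivative_transform_within[OF _ zero_less_one, of "(\<lambda>r. k 0 + k' 0 * r)" "k' 0" r "{..0}" kk] that
      by (auto simp: kk_def)
  qed
  consider "r > 0" | "r < 0" | "r = 0" by linarith
  then have "(kk has_real_derivative (if r \<ge> 0 then k' r else k' 0)) (at r)"
  proof cases
    case 1
    then have "at r within {0..} = at r"
      by (intro at_within_interior) auto
    with A[of r] 1 show ?thesis by auto
  next
    case 2
    then have "at r within {..0} = at r"
      by (intro at_within_interior) auto
    with B[of r] 2 show ?thesis by auto
  next
    case 3
    have "{0..} \<union> {..0} = (UNIV::real set)" by auto
    then have "at (0::real) = at 0 within ({0..} \<union> {..0})" by simp
    moreover have "((\<lambda>y. (kk y - kk 0) / (y - 0)) \<longlongrightarrow> k' 0) (at 0 within ({0..} \<union> {..0}))"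
      unfolding Lim_within_Un
      using A[of 0] B[of 0] by (auto simp: has_field_derivative_iff)
    ultimately show ?thesis using 3 by (simp add: has_field_derivative_iff)
  qed
  then show ?thesis by (simp add: kk_def)
qed

lemma conv_deriv:
  fixes k k' f :: "real \<Rightarrow> real"
  assumes d: "\<And>r. r \<ge> 0 \<Longrightarrow> (k has_real_derivative k' r) (at r within {0..})"
   and ck: "continuous_on {0..} k'"
   and cf: "continuous_on {0..T} f" and t: "t \<in> {0..T}"
  shows "((\<lambda>x. integral {0..x} (\<lambda>s. k (x-s) * f s)) has_real_derivative
            (k 0 * f t + integral {0..t} (\<lambda>s. k' (t-s) * f s))) (at t within {0..T})"
proof -
  define kk where "kk = (\<lambda>r. if r \<ge> 0 then k r else k 0 + k' 0 * r)"
  define kk' where "kk' = (\<lambda>r::real. k' (max 0 r))"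
  have dkk: "(kk has_real_derivative kk' r) (at r)" for r
  proof -
    have "(if 0 \<le> r then k' r else k' 0) = kk' r" by (simp add: kk'_def max_def)
    with ext_deriv[OF d, of r] show ?thesis unfolding kk_def by simp
  qed
  have ckk': "continuous_on UNIV kk'"
    unfolding kk'_def
    by (rule continuous_on_compose2[OF ck], auto intro!: continuous_intros)
  have ckk: "continuous_on UNIV kk"
    using dkk by (meson DERIV_continuous continuous_at_imp_continuous_on)
  have csh: "continuous_on UNIV (\<lambda>s. g (x - s))" if "continuous_on UNIV g" for g and x::real
    by (rule continuous_on_compose2[OF that], auto intro!: continuous_intros)
  define P where "P = (\<lambda>x. integral {0..T} (\<lambda>s. kk (x-s) * f s) - (k 0 + k' 0 * x) * integral {x..T} f
      + k' 0 * integral {x..T} (\<lambda>s. s * f s))"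
  have T0: "0 \<le> T" using t by auto
  have int1: "(\<lambda>s. g s * f s) integrable_on {a..b}" if "continuous_on UNIV g" "{a..b} \<subseteq> {0..T}" for g a b
    by (rule integrable_continuous_interval, intro continuous_intros continuous_on_subset[OF that(1)] continuous_on_subset[OF cf] that(2); simp)
  have intf: "f integrable_on {a..b}" if "{a..b} \<subseteq> {0..T}" for a b
    by (rule integrable_continuous_interval, rule continuous_on_subset[OF cf that])
  have ints: "(\<lambda>s. s * f s) integrable_on {a..b}" if "{a..b} \<subseteq> {0..T}" for a b
    by (rule integrable_continuous_interval, intro continuous_intros continuous_on_subset[OF cf that])
  have eqP: "integral {0..x} (\<lambda>s. k (x-s) * f s) = P x" if x: "x \<in> {0..T}" for x
  proof -
    have "integral {0..T} (\<lambda>s. kk (x-s) * f s) = integral {0..x} (\<lambda>s. kk (x-s) * f s) + integral {x..T} (\<lambda>s. kk (x-s) * f s)"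
      using Henstock_Kurzweil_Integration.integral_combine[OF _ _ int1[OF csh[OF ckk, of x] order_refl], of x] x by simp
    moreover have "integral {0..x} (\<lambda>s. kk (x-s) * f s) = integral {0..x} (\<lambda>s. k (x-s) * f s)"
      by (rule integral_cong) (auto simp: kk_def)
    moreover have "integral {x..T} (\<lambda>s. kk (x-s) * f s) = integral {x..T} (\<lambda>s. (k 0 + k' 0 * x) * f s - k' 0 * (s * f s))"
      by (rule integral_cong) (auto simp: kk_def algebra_simps)
    moreover have "integral {x..T} (\<lambda>s. (k 0 + k' 0 * x) * f s - k' 0 * (s * f s)) = 
        (k 0 + k' 0 * x) * integral {x..T} f - k' 0 * integral {x..T} (\<lambda>s. s * f s)"
      using x by (subst integral_diff) (auto intro!: integrable_on_mult_right intf ints)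
    ultimately show ?thesis unfolding P_def by simp
  qed
  have dP: "(P has_real_derivative (integral {0..T} (\<lambda>s. kk' (t-s) * f s) - k' 0 * integral {t..T} f + k 0 * f t)) (at t within {0..T})"
  proof -
    have L: "((\<lambda>x. integral (cbox 0 T) (\<lambda>s. kk (x-s) * f s)) has_real_derivative integral (cbox 0 T) (\<lambda>s. kk' (t-s) * f s)) (at t within {0..T})"
    proof (rule leibniz_rule_field_derivative[where fx="\<lambda>x s. kk' (x-s) * f s"])
      fix x s assume "x \<in> {0..T}" "s \<in> cbox 0 T"
      show "((\<lambda>x. kk (x-s) * f s) has_real_derivative kk' (x-s) * f s) (at x within {0..T})"
      proof -
        have "((\<lambda>x. x - s) has_real_derivative 1) (at x within {0..T})"
          by (auto intro!: derivative_eq_intros)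
        from DERIV_chain2[OF dkk this] show ?thesis by (auto intro!: DERIV_cmult_right)
      qed
    next
      fix x assume "x \<in> {0..T}"
      show "(\<lambda>s. kk (x-s) * f s) integrable_on cbox 0 T"
        unfolding cbox_interval
        by (rule int1[OF csh[OF ckk] order_refl])
    next
      show "continuous_on ({0..T} \<times> cbox 0 T) (\<lambda>(x, s). kk' (x-s) * f s)"
        unfolding cbox_interval case_prod_unfold
        by (intro continuous_intros continuous_on_compose2[OF ckk'] continuous_on_compose2[OF cf]) auto
    qed (use t in auto)
    have I1: "((\<lambda>x. integral {x..T} f) has_real_derivative - f t) (at t within {0..T})"
      by (rule integral_has_real_derivative'[OF cf t])
    have I2: "((\<lambda>x. integral {x..T} (\<lambda>s. s * f s)) has_real_derivative - (t * f t)) (at t within {0..T})"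
      by (rule integral_has_real_derivative'[OF _ t], intro continuous_intros cf)
    have lin: "((\<lambda>z. k 0 + k' 0 * z) has_real_derivative k' 0) (at t within {0..T})"
      by (auto intro!: derivative_eq_intros)
    show ?thesis unfolding P_def
      by (rule DERIV_cong[OF DERIV_add[OF DERIV_diff[OF L[unfolded cbox_interval] DERIV_mult[OF lin I1]] DERIV_cmult[OF I2]]]) (simp add: algebra_simps)
  qed
  have "integral {0..T} (\<lambda>s. kk' (t-s) * f s) = integral {0..t} (\<lambda>s. kk' (t-s) * f s) + integral {t..T} (\<lambda>s. kk' (t-s) * f s)"
    using Henstock_Kurzweil_Integration.integral_combine[OF _ _ int1[OF csh[OF ckk', of t] order_refl], of t] t by simp
  moreover have "integral {0..t} (\<lambda>s. kk' (t-s) * f s) = integral {0..t} (\<lambda>s. k' (t-s) * f s)"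
    by (rule integral_cong) (auto simp: kk'_def)
  moreover have "integral {t..T} (\<lambda>s. kk' (t-s) * f s) = integral {t..T} (\<lambda>s. k' 0 * f s)"
    by (rule integral_cong) (auto simp: kk'_def)
  moreover have "integral {t..T} (\<lambda>s. k' 0 * f s) = k' 0 * integral {t..T} f"
    by simp
  ultimately have "integral {0..T} (\<lambda>s. kk' (t-s) * f s) - k' 0 * integral {t..T} f + k 0 * f t
      = k 0 * f t + integral {0..t} (\<lambda>s. k' (t-s) * f s)" by simp
  with dP have "(P has_real_derivative (k 0 * f t + integral {0..t} (\<lambda>s. k' (t-s) * f s))) (at t within {0..T})"
    by simp
  then show ?thesis
    using eqP by (rule_tac has_field_derivative_transform_within[OF _ zero_less_one t]) auto
qed

lemma exp_int_bound:
  fixes l c :: real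
  assumes l: "l > 0" and c: "0 \<le> c"
  shows "integral {0..c} (\<lambda>s. exp (-(l*(c-s)))) \<le> 1/l"
proof -
  have "((\<lambda>s. exp (-(l*(c-s)))) has_integral ((\<lambda>s. exp (-(l*(c-s))) / l) c - (\<lambda>s. exp (-(l*(c-s))) / l) 0)) {0..c}"
  proof (rule fundamental_theorem_of_calculus[OF c])
    fix x assume "x \<in> {0..c}"
    have "((\<lambda>s. exp (-(l*(c-s))) / l) has_real_derivative (exp (-(l*(c-x))) * l / l)) (at x within {0..c})"
      by (auto intro!: derivative_eq_intros)
    then show "((\<lambda>s. exp (-(l*(c-s))) / l) has_vector_derivative exp (-(l*(c-x)))) (at x within {0..c})"
      using l by (simp add: has_real_derivative_iff_has_vector_derivative)
  qed
  then have "integral {0..c} (\<lambda>s. exp (-(l*(c-s)))) = 1/l - exp (-(l*c)) / l"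
    by (simp add: integral_unique)
  also have "\<dots> \<le> 1/l" using l by simp
  finally show ?thesis .
qed

lemma volterra:
  fixes k k' h :: "real \<Rightarrow> real"
  assumes d: "\<And>r. r \<ge> 0 \<Longrightarrow> (k has_real_derivative k' r) (at r within {0..})"
   and ck: "continuous_on {0..} k'"
   and ch: "continuous_on {0..T} h" and T: "0 \<le> T"
  shows "\<exists>f. continuous_on {0..T} f \<and> (\<forall>t\<in>{0..T}. f t = h t + integral {0..t} (\<lambda>s. k (t-s) * f s))"
proof -
  have ck0: "continuous_on {0..} k"
    by (rule DERIV_continuous_on[OF d]) auto
  have "bounded (k ` {0..T})"
    by (rule compact_imp_bounded, rule compact_continuous_image[OF continuous_on_subset[OF ck0]]) auto
  then obtain B where B: "\<forall>r\<in>{0..T}. \<bar>k r\<bar> \<le> B"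
    unfolding bounded_iff by auto
  define M where "M = max B 1"
  have M: "M > 0" "\<And>r. r \<in> {0..T} \<Longrightarrow> \<bar>k r\<bar> \<le> M" using B by (auto simp: M_def intro: order.trans[OF _ max.cobounded1])
  define l where "l = 2 * M"
  have l: "l > 0" using M by (simp add: l_def)
  define kl where "kl = (\<lambda>r. k r * exp (-(l*r)))"
  define kl' where "kl' = (\<lambda>r. k' r * exp (-(l*r)) + k r * (exp (-(l*r)) * (-l)))"
  have dkl: "(kl has_real_derivative kl' r) (at r within {0..})" if "r \<ge> 0" for r
  proof -
    have e: "((\<lambda>r. exp (-(l*r))) has_real_derivative exp(-(l*r)) * (-l)) (at r within {0..})"
      by (auto intro!: derivative_eq_intros)
    show ?thesis unfolding kl_def kl'_def
      by (rule DERIV_cong[OF DERIV_mult[OF d[OF that] e]]) (simp add: algebra_simps)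
  qed
  have ckl': "continuous_on {0..} kl'"
    unfolding kl'_def by (intro continuous_intros ck ck0)
  define hl where "hl = (\<lambda>t. h t * exp (-(l*t)))"
  have chl: "continuous_on {0..T} hl" unfolding hl_def by (intro continuous_intros ch)
  define G where "G = (\<lambda>(\<Psi>::real \<Rightarrow>\<^sub>C real) t. hl t + integral {0..t} (\<lambda>s. kl (t-s) * apply_bcontfun \<Psi> s))"
  have cG: "continuous_on {0..T} (G \<Psi>)" for \<Psi>
  proof -
    have "continuous_on {0..T} (\<lambda>t. integral {0..t} (\<lambda>s. kl (t-s) * apply_bcontfun \<Psi> s))"
      by (rule DERIV_continuous_on[OF conv_deriv[OF dkl ckl']]) auto
    then show ?thesis unfolding G_def by (intro continuous_intros chl) auto
  qed
  have exOp: "\<exists>g::real \<Rightarrow>\<^sub>C real. \<forall>x. apply_bcontfun g x = G \<Psi> (clamp 0 T x)" for \<Psi>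
  proof -
    obtain g :: "real \<Rightarrow>\<^sub>C real" where "\<And>x. apply_bcontfun g x = G \<Psi> (clamp 0 T x)"
      using continuous_on_cbox_bcontfunE[of 0 T "G \<Psi>"] cG by auto
    then show ?thesis by blast
  qed
  define Op where "Op = (\<lambda>\<Psi>. SOME g::real \<Rightarrow>\<^sub>C real. \<forall>x. apply_bcontfun g x = G \<Psi> (clamp 0 T x))"
  have Op: "apply_bcontfun (Op \<Psi>) x = G \<Psi> (clamp 0 T x)" for \<Psi> x
    unfolding Op_def using someI_ex[OF exOp[of \<Psi>]] by blast
  have clampin: "clamp 0 T x \<in> {0..T}" for x :: real
    using clamp_in_interval[of 0 T x] T by auto
  have contr: "dist (Op \<Psi>1) (Op \<Psi>2) \<le> (1/2) * dist \<Psi>1 \<Psi>2" for \<Psi>1 \<Psi>2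
  proof (rule dist_bound)
    fix x
    define c where "c = clamp 0 T x"
    have c: "c \<in> {0..T}" unfolding c_def by (rule clampin)
    define D where "D = dist \<Psi>1 \<Psi>2"
    have iA: "(\<lambda>s. kl (c-s) * apply_bcontfun \<Psi> s) integrable_on {0..c}" for \<Psi>
    proof (rule integrable_continuous_interval)
      have "continuous_on {0..c} (\<lambda>s. kl (c-s))"
        unfolding kl_def
        by (intro continuous_intros continuous_on_compose2[OF ck0]) auto
      then show "continuous_on {0..c} (\<lambda>s. kl (c-s) * apply_bcontfun \<Psi> s)"
        by (intro continuous_intros) auto
    qed
    have "G \<Psi>1 c - G \<Psi>2 c = integral {0..c} (\<lambda>s. kl (c-s) * (apply_bcontfun \<Psi>1 s - apply_bcontfun \<Psi>2 s))"
      unfolding G_def using iA[of \<Psi>1] iA[of \<Psi>2]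
      by (simp add: integral_diff[symmetric] algebra_simps)
    also have "norm \<dots> \<le> integral {0..c} (\<lambda>s. (M * D) * exp (-(l*(c-s))))"
    proof (rule integral_norm_bound_integral)
      show "(\<lambda>s. kl (c-s) * (apply_bcontfun \<Psi>1 s - apply_bcontfun \<Psi>2 s)) integrable_on {0..c}"
        using integrable_diff[OF iA[of \<Psi>1] iA[of \<Psi>2]] by (simp add: algebra_simps)
      show "(\<lambda>s. (M * D) * exp (-(l*(c-s)))) integrable_on {0..c}"
        by (rule integrable_continuous_interval) (intro continuous_intros)
      fix s assume s: "s \<in> {0..c}"
      have "norm (kl (c-s) * (apply_bcontfun \<Psi>1 s - apply_bcontfun \<Psi>2 s)) = \<bar>k (c-s)\<bar> * exp (-(l*(c-s))) * dist (apply_bcontfun \<Psi>1 s) (apply_bcontfun \<Psi>2 s)"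
        by (simp add: kl_def abs_mult dist_real_def)
      also have "\<dots> \<le> M * exp (-(l*(c-s))) * D"
        unfolding D_def
        using M(2)[of "c-s"] s c dist_bounded[of \<Psi>1 s \<Psi>2]
        by (intro mult_mono) auto
      finally show "norm (kl (c-s) * (apply_bcontfun \<Psi>1 s - apply_bcontfun \<Psi>2 s)) \<le> (M * D) * exp (-(l*(c-s)))"
        by (simp add: algebra_simps)
    qed
    also have "\<dots> = (M * D) * integral {0..c} (\<lambda>s. exp (-(l*(c-s))))"
      by simp
    also have "\<dots> \<le> (M * D) * (1/l)"
      using M(1) D_def c exp_int_bound[OF l, of c] by (intro mult_left_mono) auto
    also have "\<dots> = (1/2) * D" using M(1) by (simp add: l_def)
    finally show "dist (apply_bcontfun (Op \<Psi>1) x) (apply_bcontfun (Op \<Psi>2) x) \<le> (1/2) * dist \<Psi>1 \<Psi>2"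
      unfolding Op c_def[symmetric] D_def by (simp add: dist_real_def)
  qed
  obtain \<Psi> where fixp: "Op \<Psi> = \<Psi>"
    using banach_fix_type[of "1/2" Op] contr by auto
  define f where "f = (\<lambda>t. exp (l*t) * apply_bcontfun \<Psi> t)"
  have "continuous_on {0..T} f" unfolding f_def by (intro continuous_intros) auto
  moreover have "f t = h t + integral {0..t} (\<lambda>s. k (t-s) * f s)" if t: "t \<in> {0..T}" for t
  proof -
    have "apply_bcontfun \<Psi> t = G \<Psi> t"
      using Op[of \<Psi> t] fixp t by (simp add: clamp_cancel_cbox[of t 0 T, simplified])
    then have "f t = exp (l*t) * hl t + exp (l*t) * integral {0..t} (\<lambda>s. kl (t-s) * apply_bcontfun \<Psi> s)"
      unfolding f_def G_def by (simp add: algebra_simps)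
    also have "exp (l*t) * hl t = h t"
      by (simp add: hl_def mult_exp_exp)
    also have "exp (l*t) * integral {0..t} (\<lambda>s. kl (t-s) * apply_bcontfun \<Psi> s)
        = integral {0..t} (\<lambda>s. exp (l*t) * (kl (t-s) * apply_bcontfun \<Psi> s))"
      by simp
    also have "\<dots> = integral {0..t} (\<lambda>s. k (t-s) * f s)"
    proof (rule integral_cong)
      fix s assume "s \<in> {0..t}"
      have "exp (l*t) * exp (-(l*(t-s))) = exp (l * s)"
        by (simp add: mult_exp_exp algebra_simps)
      then show "exp (l*t) * (kl (t-s) * apply_bcontfun \<Psi> s) = k (t-s) * f s"
        unfolding kl_def f_def by (metis (no_types, lifting) mult.assoc mult.left_commute)
    qed
    finally show ?thesis .
  qed
  ultimately show ?thesis by blast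
qed

lemma mvt_real:
  fixes f f' :: "real \<Rightarrow> real"
  assumes ab: "a < b" and d: "\<And>x. x \<in> {a..b} \<Longrightarrow> (f has_real_derivative f' x) (at x within S)"
    and sub: "{a..b} \<subseteq> S"
  shows "\<exists>x\<in>{a<..<b}. f b - f a = f' x * (b - a)"
proof -
  have "\<exists>x\<in>{a<..<b}. f b - f a = (\<lambda>h. f' x * h) (b - a)"
  proof (rule mvt_simple[OF ab])
    fix x assume "a \<le> x" "x \<le> b"
    then have "(f has_real_derivative f' x) (at x within {a..b})"
      using has_field_derivative_subset[OF d sub] by auto
    then show "(f has_derivative (\<lambda>h. f' x * h)) (at x within {a..b})"
      by (simp add: has_field_derivative_def)
  qed
  then show ?thesis by auto
qed

lemma shape:
  fixes P P1 P2 :: "real \<Rightarrow> real"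
  assumes x0: "0 < x0"
    and dP: "\<And>x. x \<in> {0..x0} \<Longrightarrow> (P has_real_derivative P1 x) (at x within {0..x0})"
    and dP1: "\<And>x. x \<in> {0..x0} \<Longrightarrow> (P1 has_real_derivative P2 x) (at x within {0..x0})"
    and dec: "\<And>a b. 0 \<le> a \<Longrightarrow> a < b \<Longrightarrow> b \<le> x0 \<Longrightarrow> P2 b < P2 a"
    and P0: "P 0 = 0" and Px0: "P x0 = 0" and P1x0: "P1 x0 = 0"
    and y: "0 < y" "y < x0"
  shows "P y < 0"
proof (rule ccontr)
  assume "\<not> P y < 0"
  then have Py: "P y \<ge> 0" by simp
  obtain a where a: "a \<in> {0<..<y}" "P y - P 0 = P1 a * (y - 0)"
    using mvt_real[of 0 y P P1 "{0..x0}"] y dP by auto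
  obtain b where b: "b \<in> {y<..<x0}" "P x0 - P y = P1 b * (x0 - y)"
    using mvt_real[of y x0 P P1 "{0..x0}"] y dP by auto
  have "P1 a \<ge> 0" using a Py P0 y by (simp add: zero_le_mult_iff)
  have "P1 b * (x0 - y) \<le> 0" using b(2) Py Px0 by linarith
  then have "P1 b \<le> 0" using y by (auto simp add: mult_le_0_iff)
  obtain d where d: "d \<in> {a<..<b}" "P1 b - P1 a = P2 d * (b - a)"
    using mvt_real[of a b P1 P2 "{0..x0}"] a b dP1 by auto
  obtain c where c: "c \<in> {b<..<x0}" "P1 x0 - P1 b = P2 c * (x0 - b)"
    using mvt_real[of b x0 P1 P2 "{0..x0}"] a b dP1 by auto
  have "P2 d \<le> 0"
    using d \<open>P1 a \<ge> 0\<close> \<open>P1 b \<le> 0\<close> by (smt (verit) greaterThanLessThan_iff mult_pos_pos)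
  moreover have "P2 c \<ge> 0"
    using c \<open>P1 b \<le> 0\<close> P1x0 by (smt (verit) greaterThanLessThan_iff mult_neg_pos)
  moreover have "P2 c < P2 d"
    using dec[of d c] a b c d by auto
  ultimately show False by simp
qed

lemma chain_exp:
  fixes \<phi> \<phi>' :: "real \<Rightarrow> real"
  assumes d: "\<And>p. p \<in> {0..1} \<Longrightarrow> (\<phi> has_real_derivative \<phi>' p) (at p within {0..1})"
    and r: "r \<ge> 0"
  shows "((\<lambda>r. \<phi> (exp (-r))) has_real_derivative \<phi>' (exp (-r)) * (- exp (-r))) (at r within {0..})"
proof -
  have sub: "(\<lambda>r. exp (-r)) ` {0..} \<subseteq> {0..1::real}" by auto
  have "(\<phi> has_real_derivative \<phi>' (exp (-r))) (at (exp (-r)) within ((\<lambda>r. exp (-r)) ` {0..}))"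
    by (rule has_field_derivative_subset[OF d sub]) (use r in auto)
  moreover have "((\<lambda>r. exp (-r)) has_real_derivative - exp (-r)) (at r within {0..})" (is "(?g has_real_derivative _) ?F")
    by (auto intro!: derivative_eq_intros)
  ultimately have "((\<phi> \<circ> ?g) has_real_derivative \<phi>' (exp (-r)) * (- exp (-r))) ?F"
    by (rule DERIV_image_chain)
  then show ?thesis by (simp add: o_def)
qed

lemma chain_lin:
  fixes \<phi> \<phi>' :: "real \<Rightarrow> real"
  assumes d: "\<And>p. p \<in> {0..1} \<Longrightarrow> (\<phi> has_real_derivative \<phi>' p) (at p within {0..1})"
    and c: "c > 0" and x0: "x0 * c \<le> 1" and x: "x \<in> {0..x0}"
  shows "((\<lambda>x. \<phi> (x * c)) has_real_derivative \<phi>' (x * c) * c) (at x within {0..x0})"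
proof -
  have sub: "(\<lambda>x. x * c) ` {0..x0} \<subseteq> {0..1::real}"
  proof
    fix z assume "z \<in> (\<lambda>x. x * c) ` {0..x0}"
    then obtain xa where xa: "xa \<in> {0..x0}" "z = xa * c" by auto
    have "xa * c \<le> x0 * c" using xa c by (intro mult_right_mono) auto
    then have "z \<le> 1" using x0 xa(2) by linarith
    moreover have "0 \<le> z" using xa c by simp
    ultimately show "z \<in> {0..1}" by auto
  qed
  have "(\<phi> has_real_derivative \<phi>' (x * c)) (at (x * c) within ((\<lambda>x. x * c) ` {0..x0}))"
    by (rule has_field_derivative_subset[OF d sub]) (use x sub in blast)
  moreover have "((\<lambda>x. x * c) has_real_derivative c) (at x within {0..x0})" (is "(?g has_real_derivative _) ?F")
    by (auto intro!: derivative_eq_intros)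
  ultimately have "((\<phi> \<circ> ?g) has_real_derivative \<phi>' (x * c) * c) ?F"
    by (rule DERIV_image_chain)
  then show ?thesis by (simp add: o_def)
qed

lemma leib_aux:
  fixes \<phi> \<phi>' g :: "real \<Rightarrow> real"
  assumes d: "\<And>p. p \<in> {0..1} \<Longrightarrow> (\<phi> has_real_derivative \<phi>' p) (at p within {0..1})"
    and c\<phi>': "continuous_on {0..1} \<phi>'"
    and cg: "continuous_on {0..b} g"
    and x0: "x0 * exp b \<le> 1" "0 \<le> x0" and b: "0 \<le> b" and x: "x \<in> {0..x0}"
  shows "((\<lambda>x. integral {0..b} (\<lambda>s. \<phi> (x * exp s) * g s)) has_real_derivative
           integral {0..b} (\<lambda>s. \<phi>' (x * exp s) * (exp s * g s))) (at x within {0..x0})"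
proof -
  have c\<phi>: "continuous_on {0..1} \<phi>"
    by (rule DERIV_continuous_on[OF d])
  have inr: "x * exp s \<in> {0..1}" if "x \<in> {0..x0}" "s \<in> {0..b}" for x s
  proof -
    have "x * exp s \<le> x0 * exp b"
      using that by (intro mult_mono) auto
    then show ?thesis using that x0 by auto
  qed
  have "((\<lambda>x. integral (cbox 0 b) (\<lambda>s. \<phi> (x * exp s) * g s)) has_real_derivative
           integral (cbox 0 b) (\<lambda>s. \<phi>' (x * exp s) * (exp s * g s))) (at x within {0..x0})"
  proof (rule leibniz_rule_field_derivative[where fx="\<lambda>x s. \<phi>' (x * exp s) * (exp s * g s)"])
    fix x s assume xs: "x \<in> {0..x0}" "s \<in> cbox 0 b"
    have "x0 * exp s \<le> 1"
      using xs x0 by (smt (verit, best) atLeastAtMost_iff cbox_interval exp_le_cancel_iff mult_left_mono)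
    from DERIV_cmult_right[OF chain_lin[OF d exp_gt_zero this xs(1)], of "g s"]
    show "((\<lambda>x. \<phi> (x * exp s) * g s) has_real_derivative \<phi>' (x * exp s) * (exp s * g s)) (at x within {0..x0})"
      by (simp add: algebra_simps)
  next
    fix x assume xx: "x \<in> {0..x0}"
    show "(\<lambda>s. \<phi> (x * exp s) * g s) integrable_on cbox 0 b"
      unfolding cbox_interval
      by (rule integrable_continuous_interval, intro continuous_intros cg continuous_on_compose2[OF c\<phi>])
         (use inr xx in auto)
  next
    show "continuous_on ({0..x0} \<times> cbox 0 b) (\<lambda>(x, s). \<phi>' (x * exp s) * (exp s * g s))"
      unfolding cbox_interval case_prod_unfold
      by (intro continuous_intros continuous_on_compose2[OF c\<phi>'] continuous_on_compose2[OF cg])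
         (use inr in auto)
  qed (use x in auto)
  then show ?thesis by (simp add: cbox_interval)
qed

theorem lemma8:
  fixes w w1 w2 w3 :: "real \<Rightarrow> real"
  assumes mono: "strict_mono_on {0..1} w"
    and range: "w ` {0..1} \<subseteq> {0..1}"
    and d1: "\<And>p. p \<in> {0..1} \<Longrightarrow> (w has_real_derivative w1 p) (at p within {0..1})"
    and d2: "\<And>p. p \<in> {0..1} \<Longrightarrow> (w1 has_real_derivative w2 p) (at p within {0..1})"
    and d3: "\<And>p. p \<in> {0..1} \<Longrightarrow> (w2 has_real_derivative w3 p) (at p within {0..1})"
    and w0: "w 0 = 0" and w1v: "w 1 = 1"
    and d0: "w1 0 > 1" and d1v: "w1 1 > 1"
    and d3pos: "\<And>p. p \<in> {0..1} \<Longrightarrow> w3 p > 0"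
  shows "\<exists>(\<gamma>::real \<Rightarrow> real) (t0::real). t0 > 0 \<and>
     (\<forall>t. 0 \<le> t \<longrightarrow> \<gamma> integrable_on {0..t}) \<and>
     (\<forall>t\<in>{0..<t0}. \<gamma> t > 0) \<and> (\<forall>t. t0 \<le> t \<longrightarrow> \<gamma> t = 0) \<and>
     (\<forall>t\<in>{0..t0}. exp (-t) - w (exp (-t))
        - integral {0..t} (\<lambda>s. w (exp (-t + s)) * \<gamma> s) = 0) \<and>
     (\<forall>t. t0 < t \<longrightarrow> exp (-t) - w (exp (-t))
        - integral {0..t} (\<lambda>s. w (exp (-t + s)) * \<gamma> s) < 0)"
proof -
  have cw: "continuous_on {0..1} w" by (rule DERIV_continuous_on[OF d1])
  have cw1: "continuous_on {0..1} w1" by (rule DERIV_continuous_on[OF d2])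
  have cw2: "continuous_on {0..1} w2" by (rule DERIV_continuous_on[OF d3])
  have wnn: "w p \<ge> 0" if "p \<in> {0..1}" for p using range that by (auto simp: image_subset_iff)
  have w2inc: "w2 a < w2 b" if ab: "0 \<le> a" "a < b" "b \<le> 1" for a b
  proof -
    obtain x where x: "x \<in> {a<..<b}" "w2 b - w2 a = w3 x * (b - a)"
      using mvt_real[of a b w2 w3 "{0..1}"] ab d3 by auto
    have "w3 x > 0" using d3pos[of x] x ab by auto
    then show ?thesis using x ab by (smt (verit) mult_pos_pos)
  qed
  have w2mono: "w2 a \<le> w2 b" if "0 \<le> a" "a \<le> b" "b \<le> 1" for a b
    using w2inc[of a b] that by (cases "a = b") auto
  have emin: "exp (-r) \<in> {0..1}" if "r \<ge> 0" for r :: real using that by auto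
  obtain p0 where p0: "0 < p0" "p0 < 1" "w p0 > p0"
  proof -
    have "((\<lambda>y. (w y - w 0) / (y - 0)) \<longlongrightarrow> w1 0) (at 0 within {0..1})"
      using d1[of 0] by (simp add: has_field_derivative_iff)
    then have "eventually (\<lambda>y. 1 < (w y - w 0) / (y - 0)) (at 0 within {0..1})"
      using d0 by (rule order_tendstoD(1))
    then obtain dd where dd: "dd > 0" "\<And>y. y \<in> {0..1} \<Longrightarrow> y \<noteq> 0 \<Longrightarrow> dist y 0 < dd \<Longrightarrow> 1 < (w y - w 0) / (y - 0)"
      unfolding eventually_at by auto
    define y where "y = min (dd/2) (1/2)"
    have y: "0 < y" "y < 1" "y < dd" using dd by (auto simp: y_def)
    have "1 < w y / y" using dd(2)[of y] y w0 by auto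
    then have "w y > y" using y by (simp add: field_simps)
    then show ?thesis using that y by auto
  qed
  define T where "T = - ln p0"
  have T: "T > 0" "exp (-T) = p0" using p0 by (auto simp: T_def)
  define L where "L = (\<lambda>r. w1 (exp (-r)) * exp (-r))"
  define L' where "L' = (\<lambda>r. w2 (exp (-r)) * (- exp (-r)) * exp (-r) + (- exp (-r)) * w1 (exp (-r)))"
  define K where "K = (\<lambda>r. w (exp (-r)))"
  define K' where "K' = (\<lambda>r. - L r)"
  define gp where "gp = (\<lambda>t. exp (-t) * (w1 (exp (-t)) - 1))"
  define g where "g = (\<lambda>t. exp (-t) - w (exp (-t)))"
  have dL: "(L has_real_derivative L' r) (at r within {0..})" if "r \<ge> 0" for r
  proof -
    have e: "((\<lambda>r. exp (-r)) has_real_derivative - exp (-r)) (at r within {0..})"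
      by (auto intro!: derivative_eq_intros)
    show ?thesis unfolding L_def L'_def
      by (rule DERIV_mult[OF chain_exp[OF d2 that] e])
  qed
  have cexp: "continuous_on {0..} (\<lambda>r. \<phi> (exp (-r)))" if "continuous_on {0..1} \<phi>" for \<phi> :: "real \<Rightarrow> real"
    by (rule continuous_on_compose2[OF that], (intro continuous_intros)?, auto)
  have cL': "continuous_on {0..} L'"
    unfolding L'_def by (intro continuous_intros cexp cw1 cw2)
  have cL: "continuous_on {0..} L"
    unfolding L_def by (intro continuous_intros cexp cw1)
  have dK: "(K has_real_derivative K' r) (at r within {0..})" if "r \<ge> 0" for r
    using chain_exp[OF d1 that] unfolding K_def K'_def L_def by (simp add: algebra_simps)
  have cK': "continuous_on {0..} K'"
    unfolding K'_def by (intro continuous_intros cL)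
  have cK: "continuous_on {0..} K"
    unfolding K_def by (intro cexp cw)
  have dg: "(g has_real_derivative gp t) (at t within {0..})" if "t \<ge> 0" for t
  proof -
    have e: "((\<lambda>r. exp (-r)) has_real_derivative - exp (-r)) (at r within {0..})" for r
      by (auto intro!: derivative_eq_intros)
    have "(g has_real_derivative (- exp (-t) - w1 (exp (-t)) * (- exp (-t)))) (at t within {0..})"
      unfolding g_def by (rule DERIV_diff[OF e chain_exp[OF d1 that]])
    moreover have "- exp (-t) - w1 (exp (-t)) * (- exp (-t)) = gp t"
      unfolding gp_def by (simp add: algebra_simps)
    ultimately show ?thesis by simp
  qed
  have cgp: "continuous_on {0..T} gp"
    unfolding gp_def
    by (intro continuous_intros continuous_on_compose2[OF cw1]) auto
  obtain \<gamma> where c\<gamma>: "continuous_on {0..T} \<gamma>"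
    and eq\<gamma>: "\<And>t. t \<in> {0..T} \<Longrightarrow> \<gamma> t = gp t + integral {0..t} (\<lambda>s. L (t-s) * \<gamma> s)"
    using volterra[OF dL cL' cgp] T by auto
  define F where "F = (\<lambda>t. g t - integral {0..t} (\<lambda>s. K (t-s) * \<gamma> s))"
  have F0: "F t = 0" if t: "t \<in> {0..T}" for t
  proof -
    have "(F has_real_derivative 0) (at x within {0..T})" if x: "x \<in> {0..T}" for x
    proof -
      have cv: "((\<lambda>x. integral {0..x} (\<lambda>s. K (x-s) * \<gamma> s)) has_real_derivative
            (K 0 * \<gamma> x + integral {0..x} (\<lambda>s. K' (x-s) * \<gamma> s))) (at x within {0..T})"
        by (rule conv_deriv[OF dK cK' c\<gamma> x])
      have dg': "(g has_real_derivative gp x) (at x within {0..T})"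
        by (rule has_field_derivative_subset[OF dg]) (use x in auto)
      have "integral {0..x} (\<lambda>s. K' (x-s) * \<gamma> s) = - integral {0..x} (\<lambda>s. L (x-s) * \<gamma> s)"
        unfolding K'_def by (simp add: integral_neg)
      moreover have "K 0 = 1" using w1v by (simp add: K_def)
      ultimately have "gp x - (K 0 * \<gamma> x + integral {0..x} (\<lambda>s. K' (x-s) * \<gamma> s)) = 0"
        using eq\<gamma>[OF x] by simp
      then show ?thesis
        unfolding F_def using DERIV_diff[OF dg' cv] by simp
    qed
    then obtain C where C: "\<forall>x\<in>{0..T}. F x = C"
      using has_field_derivative_zero_constant[of "{0..T}" F] by auto
    have "F 0 = 0" using w1v by (simp add: F_def g_def)
    then show ?thesis using C t T by force
  qed
  have \<gamma>0: "\<gamma> 0 > 0" using eq\<gamma>[of 0] T d1v by (simp add: gp_def)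
  have Kpos: "K r \<ge> 0" if "r \<ge> 0" for r using wnn[OF emin[OF that]] by (simp add: K_def)
  have intK: "(\<lambda>s. K (t-s) * \<gamma> s) integrable_on {0..t}" if "t \<in> {0..T}" for t
    by (rule integrable_continuous_interval, intro continuous_intros continuous_on_compose2[OF cK] continuous_on_subset[OF c\<gamma>]) (use that in auto)
  have "\<exists>s\<in>{0..T}. \<gamma> s \<le> 0"
  proof (rule ccontr)
    assume "\<not> ?thesis"
    then have pos: "\<And>s. s \<in> {0..T} \<Longrightarrow> \<gamma> s > 0" by (meson not_le)
    have "integral {0..T} (\<lambda>s. K (T-s) * \<gamma> s) \<ge> 0"
    proof (rule integral_nonneg)
      show "(\<lambda>s. K (T-s) * \<gamma> s) integrable_on {0..T}" using intK[of T] T by auto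
      fix s assume s: "s \<in> {0..T}"
      then show "0 \<le> K (T-s) * \<gamma> s" using Kpos[of "T-s"] pos[OF s] by simp
    qed
    moreover have "g T < 0" using T p0 by (simp add: g_def)
    ultimately show False using F0[of T] T by (simp add: F_def)
  qed
  define Z where "Z = {s \<in> {0..T}. \<gamma> s \<le> 0}"
  have Zne: "Z \<noteq> {}" using \<open>\<exists>s\<in>{0..T}. \<gamma> s \<le> 0\<close> by (auto simp: Z_def)
  have Zcl: "closed Z" unfolding Z_def
    by (rule continuous_on_closed_Collect_le[OF c\<gamma>]) (auto intro: continuous_intros)
  have Zbdd: "bdd_below Z" by (auto simp: Z_def bdd_below_def)
  define t0 where "t0 = Inf Z"
  have t0Z: "t0 \<in> Z" unfolding t0_def by (rule closed_contains_Inf[OF Zne Zbdd Zcl])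
  have t0le: "t0 \<le> s" if "s \<in> Z" for s unfolding t0_def by (rule cInf_lower[OF that Zbdd])
  have t0T: "0 \<le> t0" "t0 \<le> T" "\<gamma> t0 \<le> 0" using t0Z by (auto simp: Z_def)
  have t0pos: "t0 > 0" using t0T \<gamma>0 by (cases "t0 = 0") auto
  have \<gamma>pos: "\<gamma> s > 0" if "s \<in> {0..<t0}" for s
  proof (rule ccontr)
    assume "\<not> \<gamma> s > 0"
    then have "s \<in> Z" using that t0T by (auto simp: Z_def)
    then show False using t0le[of s] that by auto
  qed
  have \<gamma>t0: "\<gamma> t0 = 0"
  proof (rule ccontr)
    assume "\<gamma> t0 \<noteq> 0"
    then have "\<gamma> t0 < 0" using t0T by auto
    then obtain x where x: "0 \<le> x" "x \<le> t0" "\<gamma> x = 0"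
      using IVT2'[of \<gamma> t0 0 0] \<gamma>0 t0T continuous_on_subset[OF c\<gamma>, of "{0..t0}"] by auto
    then have "x \<noteq> t0" using \<open>\<gamma> t0 < 0\<close> by auto
    then show False using \<gamma>pos[of x] x by auto
  qed
  have \<gamma>nn: "\<gamma> s \<ge> 0" if "s \<in> {0..t0}" for s
    using \<gamma>pos[of s] \<gamma>t0 that by (cases "s = t0") auto
  define \<gamma>t where "\<gamma>t = (\<lambda>s. if s < t0 then \<gamma> s else 0)"
  have \<gamma>teq: "\<gamma>t s = \<gamma> s" if "s \<in> {0..t0}" for s
    using that \<gamma>t0 by (auto simp: \<gamma>t_def)
  have c\<gamma>0: "continuous_on {0..t0} \<gamma>" by (rule continuous_on_subset[OF c\<gamma>]) (use t0T in auto)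
  have int\<gamma>t0: "\<gamma>t integrable_on {0..t}" if "0 \<le> t" "t \<le> t0" for t
    by (rule integrable_eq[OF integrable_continuous_interval[OF continuous_on_subset[OF c\<gamma>0]]])
       (use that \<gamma>teq in auto)
  have int\<gamma>t: "\<gamma>t integrable_on {0..t}" if "0 \<le> t" for t
  proof (cases "t \<le> t0")
    case True then show ?thesis using int\<gamma>t0 that by auto
  next
    case False
    have "\<gamma>t integrable_on {t0..t}"
      by (rule integrable_eq[OF integrable_0]) (auto simp: \<gamma>t_def)
    then show ?thesis
      using Henstock_Kurzweil_Integration.integrable_combine[where a=0 and c=t0 and b=t and f=\<gamma>t] int\<gamma>t0[of t0] t0T False by auto
  qed
  have eqpart: "exp (-t) - w (exp (-t)) - integral {0..t} (\<lambda>s. w (exp (-t + s)) * \<gamma>t s) = 0"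
    if t: "t \<in> {0..t0}" for t
  proof -
    have "integral {0..t} (\<lambda>s. w (exp (-t + s)) * \<gamma>t s) = integral {0..t} (\<lambda>s. K (t-s) * \<gamma> s)"
      by (rule integral_cong) (use t \<gamma>teq in \<open>auto simp: K_def\<close>)
    then show ?thesis using F0[of t] t t0T by (simp add: F_def g_def)
  qed
  define x0 where "x0 = exp (-t0)"
  have x0: "0 < x0" "x0 < 1" "x0 * exp t0 = 1" using t0pos by (auto simp: x0_def exp_minus field_simps)
  define \<Phi> where "\<Phi> = (\<lambda>x. x - w x - integral {0..t0} (\<lambda>s. w (x * exp s) * \<gamma> s))"
  define \<Phi>1 where "\<Phi>1 = (\<lambda>x. 1 - w1 x - integral {0..t0} (\<lambda>s. w1 (x * exp s) * (exp s * \<gamma> s)))"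
  define \<Phi>2 where "\<Phi>2 = (\<lambda>x. - w2 x - integral {0..t0} (\<lambda>s. w2 (x * exp s) * (exp s * (exp s * \<gamma> s))))"
  have sub01: "{0..x0} \<subseteq> {0..1}" using x0 by auto
  have inr: "x * exp s \<in> {0..1}" if "x \<in> {0..x0}" "s \<in> {0..t0}" for x s
  proof -
    have "x * exp s \<le> x0 * exp t0"
      using that by (intro mult_mono) auto
    then show ?thesis using that x0 by auto
  qed
  have d\<Phi>: "(\<Phi> has_real_derivative \<Phi>1 x) (at x within {0..x0})" if x: "x \<in> {0..x0}" for x
  proof -
    have a: "((\<lambda>x. x) has_real_derivative 1) (at x within {0..x0})" by (rule DERIV_ident)
    have b: "(w has_real_derivative w1 x) (at x within {0..x0})"
      by (rule has_field_derivative_subset[OF d1 sub01]) (use x sub01 in auto)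
    have c: "((\<lambda>x. integral {0..t0} (\<lambda>s. w (x * exp s) * \<gamma> s)) has_real_derivative
           integral {0..t0} (\<lambda>s. w1 (x * exp s) * (exp s * \<gamma> s))) (at x within {0..x0})"
      by (rule leib_aux[OF d1 cw1 c\<gamma>0]) (use x0 t0T x in auto)
    show ?thesis unfolding \<Phi>_def \<Phi>1_def using DERIV_diff[OF DERIV_diff[OF a b] c] by simp
  qed
  have ce\<gamma>: "continuous_on {0..t0} (\<lambda>s. exp s * \<gamma> s)" by (intro continuous_intros c\<gamma>0)
  have d\<Phi>1: "(\<Phi>1 has_real_derivative \<Phi>2 x) (at x within {0..x0})" if x: "x \<in> {0..x0}" for x
  proof -
    have a: "((\<lambda>x. 1) has_real_derivative 0) (at x within {0..x0})" by (rule DERIV_const)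
    have b: "(w1 has_real_derivative w2 x) (at x within {0..x0})"
      by (rule has_field_derivative_subset[OF d2 sub01]) (use x sub01 in auto)
    have c: "((\<lambda>x. integral {0..t0} (\<lambda>s. w1 (x * exp s) * (exp s * \<gamma> s))) has_real_derivative
           integral {0..t0} (\<lambda>s. w2 (x * exp s) * (exp s * (exp s * \<gamma> s)))) (at x within {0..x0})"
      by (rule leib_aux[OF d2 cw2 ce\<gamma>]) (use x0 t0T x in auto)
    show ?thesis unfolding \<Phi>1_def \<Phi>2_def using DERIV_diff[OF DERIV_diff[OF a b] c] by simp
  qed
  have int2: "(\<lambda>s. w2 (x * exp s) * (exp s * (exp s * \<gamma> s))) integrable_on {0..t0}" if "x \<in> {0..x0}" for x
    by (rule integrable_continuous_interval, intro continuous_intros continuous_on_compose2[OF cw2] c\<gamma>0)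
       (use inr that in auto)
  have dec: "\<Phi>2 b < \<Phi>2 a" if ab: "0 \<le> a" "a < b" "b \<le> x0" for a b
  proof -
    have "integral {0..t0} (\<lambda>s. w2 (b * exp s) * (exp s * (exp s * \<gamma> s))) - integral {0..t0} (\<lambda>s. w2 (a * exp s) * (exp s * (exp s * \<gamma> s)))
        = integral {0..t0} (\<lambda>s. (w2 (b * exp s) - w2 (a * exp s)) * (exp s * (exp s * \<gamma> s)))"
      using int2[of a] int2[of b] ab by (simp add: integral_diff[symmetric] algebra_simps)
    also have "\<dots> \<ge> 0"
    proof (rule integral_nonneg)
      show "(\<lambda>s. (w2 (b * exp s) - w2 (a * exp s)) * (exp s * (exp s * \<gamma> s))) integrable_on {0..t0}"
        using integrable_diff[OF int2[of b] int2[of a]] ab by (simp add: algebra_simps)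
      fix s assume s: "s \<in> {0..t0}"
      have "w2 (a * exp s) \<le> w2 (b * exp s)"
        using w2mono[of "a * exp s" "b * exp s"] inr[of b s] ab s by auto
      then show "0 \<le> (w2 (b * exp s) - w2 (a * exp s)) * (exp s * (exp s * \<gamma> s))"
        using \<gamma>nn[OF s] by auto
    qed
    finally have "integral {0..t0} (\<lambda>s. w2 (a * exp s) * (exp s * (exp s * \<gamma> s))) \<le> integral {0..t0} (\<lambda>s. w2 (b * exp s) * (exp s * (exp s * \<gamma> s)))"
      by simp
    moreover have "w2 a < w2 b" using w2inc[of a b] ab x0 by auto
    ultimately show ?thesis unfolding \<Phi>2_def by simp
  qed
  have \<Phi>0: "\<Phi> 0 = 0" using w0 by (simp add: \<Phi>_def)
  have expx0: "exp (-t + s) = exp (-t) * exp s" for t s :: real by (simp add: exp_add[symmetric])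
  have expx1: "exp (s - t) = exp (-t) * exp s" for t s :: real by (simp add: mult_exp_exp)
  have \<Phi>x0: "\<Phi> x0 = 0"
  proof -
    have "integral {0..t0} (\<lambda>s. w (x0 * exp s) * \<gamma> s) = integral {0..t0} (\<lambda>s. K (t0-s) * \<gamma> s)"
      by (rule integral_cong) (simp add: K_def x0_def expx0[symmetric])
    then show ?thesis using F0[of t0] t0T by (simp add: F_def g_def \<Phi>_def x0_def)
  qed
  have \<Phi>1x0: "\<Phi>1 x0 = 0"
  proof -
    have "integral {0..t0} (\<lambda>s. L (t0-s) * \<gamma> s) = integral {0..t0} (\<lambda>s. x0 * (w1 (x0 * exp s) * (exp s * \<gamma> s)))"
    proof (rule integral_cong)
      fix s
      have e: "exp (-(t0-s)) = x0 * exp s" by (simp add: x0_def mult_exp_exp)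
      show "L (t0-s) * \<gamma> s = x0 * (w1 (x0 * exp s) * (exp s * \<gamma> s))"
        unfolding L_def e by (simp add: algebra_simps)
    qed
    also have "\<dots> = x0 * integral {0..t0} (\<lambda>s. w1 (x0 * exp s) * (exp s * \<gamma> s))" by simp
    finally have "0 = x0 * (w1 x0 - 1) + x0 * integral {0..t0} (\<lambda>s. w1 (x0 * exp s) * (exp s * \<gamma> s))"
      using eq\<gamma>[of t0] t0T \<gamma>t0 by (simp add: gp_def x0_def)
    then have "x0 * \<Phi>1 x0 = 0" unfolding \<Phi>1_def by (simp add: algebra_simps)
    then show ?thesis using x0 by simp
  qed
  have after: "exp (-t) - w (exp (-t)) - integral {0..t} (\<lambda>s. w (exp (-t + s)) * \<gamma>t s) < 0"
    if t: "t0 < t" for t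
  proof -
    define y where "y = exp (-t)"
    have y: "0 < y" "y < x0" using t by (auto simp: y_def x0_def)
    have cy: "continuous_on {0..t0} (\<lambda>s. w (y * exp s) * \<gamma> s)"
      by (intro continuous_intros continuous_on_compose2[OF cw] c\<gamma>0) (use inr y in auto)
    have i1: "(\<lambda>s. w (exp (-t + s)) * \<gamma>t s) integrable_on {0..t0}"
      by (rule integrable_eq[OF integrable_continuous_interval[OF cy]])
         (use \<gamma>teq in \<open>auto simp: y_def expx0 expx1\<close>)
    have i2: "(\<lambda>s. w (exp (-t + s)) * \<gamma>t s) integrable_on {t0..t}"
      by (rule integrable_eq[OF integrable_0]) (auto simp: \<gamma>t_def)
    have iall: "(\<lambda>s. w (exp (-t + s)) * \<gamma>t s) integrable_on {0..t}"
      by (rule Henstock_Kurzweil_Integration.integrable_combine[OF _ _ i1 i2]) (use t0T t in auto)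
    have "integral {0..t0} (\<lambda>s. w (exp (-t + s)) * \<gamma>t s) + integral {t0..t} (\<lambda>s. w (exp (-t + s)) * \<gamma>t s)
        = integral {0..t} (\<lambda>s. w (exp (-t + s)) * \<gamma>t s)"
      by (rule Henstock_Kurzweil_Integration.integral_combine[OF _ _ iall]) (use t0T t in auto)
    then have "integral {0..t} (\<lambda>s. w (exp (-t + s)) * \<gamma>t s) =
        integral {0..t0} (\<lambda>s. w (exp (-t + s)) * \<gamma>t s) + integral {t0..t} (\<lambda>s. w (exp (-t + s)) * \<gamma>t s)"
      by (rule sym)
    also have "integral {t0..t} (\<lambda>s. w (exp (-t + s)) * \<gamma>t s) = 0"
      by (subst integral_cong[where g="\<lambda>s. 0"]) (auto simp: \<gamma>t_def)
    also have "integral {0..t0} (\<lambda>s. w (exp (-t + s)) * \<gamma>t s) = integral {0..t0} (\<lambda>s. w (y * exp s) * \<gamma> s)"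
      by (rule integral_cong) (use \<gamma>teq in \<open>auto simp: y_def expx0 expx1\<close>)
    finally have "exp (-t) - w (exp (-t)) - integral {0..t} (\<lambda>s. w (exp (-t + s)) * \<gamma>t s) = \<Phi> y"
      by (simp add: \<Phi>_def y_def)
    also have "\<Phi> y < 0"
      by (rule shape[OF x0(1) d\<Phi> d\<Phi>1 dec \<Phi>0 \<Phi>x0 \<Phi>1x0 y])
    finally show ?thesis .
  qed
  show ?thesis
  proof (intro exI conjI)
    show "t0 > 0" by (rule t0pos)
    show "\<forall>t. 0 \<le> t \<longrightarrow> \<gamma>t integrable_on {0..t}" using int\<gamma>t by auto
    show "\<forall>t\<in>{0..<t0}. \<gamma>t t > 0" using \<gamma>pos by (auto simp: \<gamma>t_def)
    show "\<forall>t. t0 \<le> t \<longrightarrow> \<gamma>t t = 0" by (auto simp: \<gamma>t_def)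
    show "\<forall>t\<in>{0..t0}. exp (-t) - w (exp (-t)) - integral {0..t} (\<lambda>s. w (exp (-t + s)) * \<gamma>t s) = 0"
      using eqpart by auto
    show "\<forall>t. t0 < t \<longrightarrow> exp (-t) - w (exp (-t)) - integral {0..t} (\<lambda>s. w (exp (-t + s)) * \<gamma>t s) < 0"
      using after by auto
  qed
qed

end
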